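(* Let $k\geq 1$ and $n\geq 2$ be integers and let $r$ be an integer with $0\leq r\leq n$. Then \[C_{k,n+r}C_{k,n-r}-C_{k,n}^2=8(k-1)^{n-r+1}\,B_{k,r}^2.\]
   Context: For an integer $k\geq 1$, the generalized balancing numbers are defined by $B_{k,0}=0$, $B_{k,1}=1$ and $B_{k,n}=3kB_{k,n-1}+(1-k)B_{k,n-2}$ for $n\geq 2$; the generalized balancing-Lucas numbers are defined by $C_{k,0}=1$, $C_{k,1}=3$ and $C_{k,n}=3kC_{k,n-1}+(1-k)C_{k,n-2}$ for $n\geq 2$. *)

theory Defs
  imports Main
begin

fun genB :: "int \<Rightarrow> nat \<Rightarrow> int" where
  "genB k 0 = 0"
| "genB k (Suc 0) = 1"
| "genB k (Suc (Suc n)) = 3 * k * genB k (Suc n) + (1 - k) * genB k n"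

fun genC :: "int \<Rightarrow> nat \<Rightarrow> int" where
  "genC k 0 = 1"
| "genC k (Suc 0) = 3"
| "genC k (Suc (Suc n)) = 3 * k * genC k (Suc n) + (1 - k) * genC k n"

end

theory Submission
  imports Defs
begin

lemma two_step:
  assumes "P 0" "P (Suc 0)" "\<And>n. P n \<Longrightarrow> P (Suc n) \<Longrightarrow> P (Suc (Suc n))"
  shows "P n"
proof -
  have "P n \<and> P (Suc n)" by (induction n) (use assms in auto)
  thus ?thesis by simp
qed

lemma Cr2: "genC k m * genC k (Suc (Suc m)) - (genC k (Suc m))^2 = 8 * (k-1)^(Suc m)"
proof (induction m)
  case 0 then show ?case by (simp add: algebra_simps power2_eq_square)
next
  case (Suc m)
  have "genC k (Suc m) * genC k (Suc (Suc (Suc m))) - (genC k (Suc (Suc m)))^2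
     = (k-1) * (genC k m * genC k (Suc (Suc m)) - (genC k (Suc m))^2)"
    by (simp add: algebra_simps power2_eq_square)
  then show ?case using Suc by simp
qed

lemma Cs1: "genC k m * genC k (Suc (m + r)) - genC k (m + r) * genC k (Suc m) = 8 * (k-1)^(Suc m) * genB k r"
proof (induction r rule: two_step)
  case 1 then show ?case by simp
next
  case 2 then show ?case using Cr2[of k m] by (simp add: power2_eq_square)
next
  case (3 n)
  have "genC k m * genC k (Suc (m + Suc (Suc n))) - genC k (m + Suc (Suc n)) * genC k (Suc m)
    = 3*k*(genC k m * genC k (Suc (m + Suc n)) - genC k (m + Suc n) * genC k (Suc m))
      + (1-k)*(genC k m * genC k (Suc (m + n)) - genC k (m + n) * genC k (Suc m))"
    by (simp add: algebra_simps)
  also have "\<dots> = 8 * (k-1)^(Suc m) * (3*k*genB k (Suc n) + (1-k)*genB k n)"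
    by (simp only: 3) (simp add: algebra_simps)
  finally show ?case by simp
qed

lemma Cgen: "genC k m * genC k (m + r + s) - genC k (m + r) * genC k (m + s) = 8 * (k-1)^(Suc m) * genB k r * genB k s"
proof (induction s rule: two_step)
  case 1 then show ?case by simp
next
  case 2 then show ?case using Cs1[of k m r] by (simp add: algebra_simps)
next
  case (3 n)
  have "genC k m * genC k (m + r + Suc (Suc n)) - genC k (m + r) * genC k (m + Suc (Suc n))
    = 3*k*(genC k m * genC k (m + r + Suc n) - genC k (m + r) * genC k (m + Suc n))
      + (1-k)*(genC k m * genC k (m + r + n) - genC k (m + r) * genC k (m + n))"
    by (simp add: algebra_simps)
  also have "\<dots> = 8 * (k-1)^(Suc m) * genB k r * (3*k*genB k (Suc n) + (1-k)*genB k n)"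
    by (simp only: 3) (simp add: algebra_simps)
  finally show ?case by simp
qed

theorem mainTheorem4:
  fixes k :: int and n r :: nat
  assumes "k \<ge> 1" and "n \<ge> 2" and "r \<le> n"
  shows "genC k (n + r) * genC k (n - r) - (genC k n)^2
           = 8 * (k - 1) ^ (n - r + 1) * (genB k r)^2"
proof -
  define m where "m = n - r"
  have n: "n = m + r" using assms(3) m_def by simp
  show ?thesis using Cgen[of k m r r]
    by (simp add: n power2_eq_square algebra_simps)
qed

end
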